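(* Let $\Omega=(0,1)^2$, let $N$ be an even positive integer, $h=1/N$, and let $\mathcal T_h=\{Q_{jk}\}_{j,k=1}^N$ be the uniform partition of $\Omega$ into squares $Q_{jk}=((j-1)h,jh)\times((k-1)h,kh)$. Let real coefficients $\xi_{jk},\eta_{jk}$ ($1\le j,k\le N-1$) be given and set $$\mathbf u_h=\sum_{j,k=1}^{N-1}\binom{\xi_{jk}}{\eta_{jk}}\phi_{jk}+\binom{1/2}{0}\Big[\sum_{j=1}^{N-1}\phi_{j,N}+\psi_{2,TL}+\psi_{2,TR}\Big],$$ with $\phi_{jk}$, $\psi_{2,TL}$, $\psi_{2,TR}$ as described in the context. Suppose that $$\sum_{Q\in\mathcal T_h}\int_Q(\nabla\cdot\mathbf u_h)\,q_h\,d\mathbf x=0\qquad\text{for all } q_h\in\widetilde{\mathscr P}_0^h .$$ Then $$\Big|\int_{Q_{jk}}\nabla\cdot\mathbf u_h\,d\mathbf x\Big|=h^3\qquad\text{for all } Q_{jk}\in\mathcal T_h,$$ and these integrals alternate in sign in a checkerboard pattern: there is a number $\gamma$ with $|\gamma|=h^3$ such that $\int_{Q_{jk}}\nabla\cdot\mathbf u_h\,d\mathbf x=\gamma$ whenever $j+k$ is even and $=-\gamma$ whenever $j+k$ is odd.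
   Context: Divergence and gradients are taken elementwise on each square $Q\in\mathcal T_h$. Nonconforming $P_1$ basis functions: for a vertex $V_{jk}=(jh,kh)$ with $1\le j\le N-1$, $1\le k\le N$, $\phi_{jk}$ is the function which on each square $Q\in\mathcal T_h$ is a polynomial of degree at most one, is supported on the (at most four) squares having $V_{jk}$ as a vertex, and on each such square takes the value $1$ at the midpoints of the two edges of that square having $V_{jk}$ as an endpoint and the value $0$ at the midpoints of the other two edges. (So for $k\le N-1$ these are the usual basis functions of the $P_1$-nonconforming quadrilateral space vanishing at boundary edge midpoints; $\phi_{j,N}$, attached to a vertex on the top side $y=1$, is supported on $Q_{j,N}\cup Q_{j+1,N}$ and equals $1$ at the top-edge midpoints $((j-\tfrac12)h,1)$, $((j+\tfrac12)h,1)$.) DSSY corner functions: on the reference square $\widehat Q=[-1,1]^2$ let $\theta(t)=t^2-\tfrac53 t^4$ and $\widehat\psi_2(\widehat x,\widehat y)=\tfrac14+\tfrac12\widehat y+\tfrac38\big(\theta(\widehat x)-\theta(\widehat y)\big)$, which equals $1$ at the edge midpoint $(0,1)$ and $0$ at the edge midpoints $(1,0),(-1,0),(0,-1)$. For a square $Q$ with center $c_Q$ let $F_Q(\widehat x,\widehat y)=c_Q+\tfrac h2(\widehat x,\widehat y)$. Then $\psi_{2,TL}=\widehat\psi_2\circ F_{Q_{1N}}^{-1}$ on $Q_{1N}$ and $0$ elsewhere, and $\psi_{2,TR}=\widehat\psi_2\circ F_{Q_{NN}}^{-1}$ on $Q_{NN}$ and $0$ elsewhere (the top-left and top-right corner squares).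 Pressure space: call $Q_{jk}$ red if $j+k$ is even and black if $j+k$ is odd, and let $\Omega^R,\Omega^B$ be the unions of red, respectively black, squares. $\widetilde{\mathscr P}_0^h$ is the space of functions that are constant on each $Q_{jk}$ and satisfy $\int_{\Omega^R}q_h\,d\mathbf x=0$ and $\int_{\Omega^B}q_h\,d\mathbf x=0$ (equivalently, the direct sum of the mean-zero piecewise constants supported on red squares and those supported on black squares; its dimension is $N^2-2$). *)

theory Defs
  imports "HOL-Analysis.Analysis"
begin

definition mesh :: "nat \<Rightarrow> real" where
  "mesh N = 1 / real N"

definition sq :: "nat \<Rightarrow> nat \<Rightarrow> nat \<Rightarrow> (real \<times> real) set" where
  "sq N j k = box ((real j - 1) * mesh N, (real k - 1) * mesh N) (real j * mesh N, real k * mesh N)"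

definition center :: "nat \<Rightarrow> nat \<Rightarrow> nat \<Rightarrow> real \<times> real" where
  "center N j k = ((real j - 1/2) * mesh N, (real k - 1/2) * mesh N)"

definition vert :: "nat \<Rightarrow> nat \<Rightarrow> nat \<Rightarrow> real \<times> real" where
  "vert N j k = (real j * mesh N, real k * mesh N)"

text \<open>On a square with center c and side h, the polynomial of degree at most one
  taking value 1 at the midpoints of the two edges having the vertex V as an endpoint
  and 0 at the two other edge midpoints (see lemmas loc_phi_mid_* below).\<close>
definition loc_phi :: "real \<Rightarrow> real \<times> real \<Rightarrow> real \<times> real \<Rightarrow> real \<times> real \<Rightarrow> real" where
  "loc_phi h V c p = 1/2 + 2 * ((fst V - fst c) * (fst p - fst c)
                               + (snd V - snd c) * (snd p - snd c)) / h^2"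

lemma loc_phi_mid_values:
  fixes h sx sy cx cy :: real
  assumes "h \<noteq> 0" "sx \<in> {-1,1}" "sy \<in> {-1,1}"
  shows "loc_phi h (cx + h/2 * sx, cy + h/2 * sy) (cx, cy) (cx + h/2 * sx, cy) = 1"
    and "loc_phi h (cx + h/2 * sx, cy + h/2 * sy) (cx, cy) (cx, cy + h/2 * sy) = 1"
    and "loc_phi h (cx + h/2 * sx, cy + h/2 * sy) (cx, cy) (cx - h/2 * sx, cy) = 0"
    and "loc_phi h (cx + h/2 * sx, cy + h/2 * sy) (cx, cy) (cx, cy - h/2 * sy) = 0"
  using assms by (auto simp: loc_phi_def power2_eq_square field_simps)

text \<open>Nonconforming P1 basis function attached to V_jk: on each square Q_{j'k'}
  of the mesh having V_jk as a vertex (j' in {j,j+1}, k' in {k,k+1}) it is the local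
  function above; it vanishes elsewhere (values on the square boundaries,
  a null set, are irrelevant and set to 0).\<close>
definition phi :: "nat \<Rightarrow> nat \<Rightarrow> nat \<Rightarrow> real \<times> real \<Rightarrow> real" where
  "phi N j k p = (\<Sum>jk' \<in> ({1..N} \<times> {1..N}) \<inter> ({j, j+1} \<times> {k, k+1}).
      indicator (sq N (fst jk') (snd jk')) p *
      loc_phi (mesh N) (vert N j k) (center N (fst jk') (snd jk')) p)"

definition theta :: "real \<Rightarrow> real" where
  "theta t = t^2 - 5/3 * t^4"

definition psi2_hat :: "real \<times> real \<Rightarrow> real" where
  "psi2_hat xy = 1/4 + 1/2 * snd xy + 3/8 * (theta (fst xy) - theta (snd xy))"

text \<open>Inverse of F_Q(xh,yh) = c_Q + (h/2)(xh,yh).\<close>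
definition Finv :: "nat \<Rightarrow> nat \<Rightarrow> nat \<Rightarrow> real \<times> real \<Rightarrow> real \<times> real" where
  "Finv N j k p = ((2 / mesh N) * (fst p - fst (center N j k)),
                   (2 / mesh N) * (snd p - snd (center N j k)))"

definition psi2_TL :: "nat \<Rightarrow> real \<times> real \<Rightarrow> real" where
  "psi2_TL N p = indicator (sq N 1 N) p * psi2_hat (Finv N 1 N p)"

definition psi2_TR :: "nat \<Rightarrow> real \<times> real \<Rightarrow> real" where
  "psi2_TR N p = indicator (sq N N N) p * psi2_hat (Finv N N N p)"

definition uh1 :: "nat \<Rightarrow> (nat \<Rightarrow> nat \<Rightarrow> real) \<Rightarrow> real \<times> real \<Rightarrow> real" where
  "uh1 N xi p = (\<Sum>j=1..N-1. \<Sum>k=1..N-1. xi j k * phi N j k p)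
     + 1/2 * ((\<Sum>j=1..N-1. phi N j N p) + psi2_TL N p + psi2_TR N p)"

definition uh2 :: "nat \<Rightarrow> (nat \<Rightarrow> nat \<Rightarrow> real) \<Rightarrow> real \<times> real \<Rightarrow> real" where
  "uh2 N eta p = (\<Sum>j=1..N-1. \<Sum>k=1..N-1. eta j k * phi N j k p)"

text \<open>Elementwise divergence: at points interior to a square the piecewise
  function coincides locally with the polynomial on that square, so the partial
  derivatives there are the elementwise ones.\<close>
definition divh :: "nat \<Rightarrow> (nat \<Rightarrow> nat \<Rightarrow> real) \<Rightarrow> (nat \<Rightarrow> nat \<Rightarrow> real) \<Rightarrow> real \<times> real \<Rightarrow> real" where
  "divh N xi eta p = deriv (\<lambda>t. uh1 N xi (t, snd p)) (fst p)
                   + deriv (\<lambda>t. uh2 N eta (fst p, t)) (snd p)"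

text \<open>Pressure space: a piecewise constant q_h is given by its values q j k on
  Q_jk (1 \<le> j,k \<le> N); it lies in the space iff its integrals over the red
  (j+k even) and black (j+k odd) squares vanish.\<close>
definition pressure_space :: "nat \<Rightarrow> (nat \<Rightarrow> nat \<Rightarrow> real) \<Rightarrow> bool" where
  "pressure_space N q \<longleftrightarrow>
     (\<Sum>j=1..N. \<Sum>k=1..N. if even (j+k) then q j k * (mesh N)^2 else 0) = 0 \<and>
     (\<Sum>j=1..N. \<Sum>k=1..N. if odd (j+k) then q j k * (mesh N)^2 else 0) = 0"

end

theory Submission
  imports Defs
begin

lemma mesh_pos: "N > 0 \<Longrightarrow> mesh N > 0" by (simp add: mesh_def)

lemma mem_box_pair: "(x,y) \<in> box (a::real,c::real) (b,d) \<longleftrightarrow> a < x \<and> x < b \<and> c < y \<and> y < d"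
  by (auto simp: mem_box Basis_prod_def)

lemma mem_sq: "p \<in> sq N a b \<longleftrightarrow> (real a - 1) * mesh N < fst p \<and> fst p < real a * mesh N
   \<and> (real b - 1) * mesh N < snd p \<and> snd p < real b * mesh N"
  by (cases p) (simp add: sq_def mem_box_pair)

lemma idx_eq:
  fixes h x :: real
  assumes "h > 0" "(real a - 1) * h < x" "x < real a * h" "(real a' - 1) * h < x" "x < real a' * h"
  shows "a = a'"
proof -
  have "real a' - 1 < real a" using assms by (metis less_trans mult_less_cancel_right_pos)
  moreover have "real a - 1 < real a'" using assms by (metis less_trans mult_less_cancel_right_pos)
  ultimately show ?thesis by linarith
qed

lemma sq_disj: "N > 0 \<Longrightarrow> p \<in> sq N a b \<Longrightarrow> p \<in> sq N a' b' \<Longrightarrow> a = a' \<and> b = b'"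
  using idx_eq[OF mesh_pos] by (metis mem_sq)

lemma ind_sq: "N > 0 \<Longrightarrow> p \<in> sq N a b \<Longrightarrow> indicator (sq N a' b') p = (if (a',b') = (a,b) then 1 else (0::real))"
proof -
  assume h: "N > 0" "p \<in> sq N a b"
  have "p \<in> sq N a' b' \<longleftrightarrow> (a',b') = (a,b)" using sq_disj[OF h(1) h(2), of a' b'] h(2) by blast
  then show ?thesis unfolding indicator_def by simp
qed


lemma odd_int_zero:
  fixes f :: "real \<times> real \<Rightarrow> real"
  assumes "f integrable_on cbox (l1,l2) (u1,u2)" "\<And>p. f ((l1+u1, l2+u2) - p) = - f p"
  shows "(f has_integral 0) (cbox (l1,l2) (u1,u2))"
proof -
  define c0 where "c0 = (l1+u1, l2+u2)"
  define I where "I = integral (cbox (l1,l2) (u1,u2)) f"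
  have fI: "(f has_integral I) (cbox (l1,l2) (u1,u2))" using assms(1) unfolding I_def by (rule integrable_integral)
  have img: "(\<lambda>x. (1 / (-1::real)) *\<^sub>R x + -((1 / (-1)) *\<^sub>R c0)) ` cbox (l1,l2) (u1,u2) = cbox (l1,l2) (u1,u2)"
  proof (rule set_eqI, rule iffI)
    fix x assume "x \<in> (\<lambda>x. (1 / (-1::real)) *\<^sub>R x + -((1 / (-1)) *\<^sub>R c0)) ` cbox (l1,l2) (u1,u2)"
    then obtain z where z: "z \<in> cbox (l1,l2) (u1,u2)" "x = c0 - z" by auto
    then show "x \<in> cbox (l1,l2) (u1,u2)" by (cases z) (auto simp: c0_def)
  next
    fix x assume x: "x \<in> cbox (l1,l2) (u1,u2)"
    have "c0 - x \<in> cbox (l1,l2) (u1,u2)" using x by (cases x) (auto simp: c0_def)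
    moreover have "x = (1 / (-1::real)) *\<^sub>R (c0 - x) + -((1 / (-1)) *\<^sub>R c0)" by simp
    ultimately show "x \<in> (\<lambda>x. (1 / (-1::real)) *\<^sub>R x + -((1 / (-1)) *\<^sub>R c0)) ` cbox (l1,l2) (u1,u2)" by blast
  qed
  have "((\<lambda>x. f ((-1::real) *\<^sub>R x + c0)) has_integral (1 / (\<bar>-1::real\<bar> ^ DIM(real\<times>real))) *\<^sub>R I) (cbox (l1,l2) (u1,u2))"
    using has_integral_affinity[OF fI, of "-1" c0] img by simp
  moreover have "(\<lambda>x. f ((-1::real) *\<^sub>R x + c0)) = (\<lambda>x. - f x)"
    using assms(2) by (auto simp: c0_def)
  ultimately have "((\<lambda>x. - f x) has_integral I) (cbox (l1,l2) (u1,u2))" by simp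
  from has_integral_neg[OF this] have "(f has_integral -I) (cbox (l1,l2) (u1,u2))" by simp
  then have "- I = I" using has_integral_unique[OF _ fI] by blast
  then show ?thesis using fI by simp
qed


definition phiL :: "nat \<Rightarrow> nat \<Rightarrow> nat \<Rightarrow> nat \<Rightarrow> nat \<Rightarrow> real \<times> real \<Rightarrow> real" where
  "phiL N a b j k p = (\<Sum>jk' \<in> ({1..N} \<times> {1..N}) \<inter> ({j, j+1} \<times> {k, k+1}).
      (if fst jk' = a \<and> snd jk' = b then 1 else 0) *
      loc_phi (mesh N) (vert N j k) (center N (fst jk') (snd jk')) p)"

definition phiLx :: "nat \<Rightarrow> nat \<Rightarrow> nat \<Rightarrow> nat \<Rightarrow> nat \<Rightarrow> real" where
  "phiLx N a b j k = (\<Sum>jk' \<in> ({1..N} \<times> {1..N}) \<inter> ({j, j+1} \<times> {k, k+1}).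
      (if fst jk' = a \<and> snd jk' = b then 1 else 0) *
      (2 * (fst (vert N j k) - fst (center N (fst jk') (snd jk'))) / (mesh N)^2))"

definition phiLy :: "nat \<Rightarrow> nat \<Rightarrow> nat \<Rightarrow> nat \<Rightarrow> nat \<Rightarrow> real" where
  "phiLy N a b j k = (\<Sum>jk' \<in> ({1..N} \<times> {1..N}) \<inter> ({j, j+1} \<times> {k, k+1}).
      (if fst jk' = a \<and> snd jk' = b then 1 else 0) *
      (2 * (snd (vert N j k) - snd (center N (fst jk') (snd jk'))) / (mesh N)^2))"

definition dpsi :: "nat \<Rightarrow> nat \<Rightarrow> real \<Rightarrow> real" where
  "dpsi N c x = 3/8 * (2 * (2 / mesh N * (x - fst (center N c N)))
        - 20/3 * (2 / mesh N * (x - fst (center N c N)))^3) * (2 / mesh N)"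

definition U1 :: "nat \<Rightarrow> (nat \<Rightarrow> nat \<Rightarrow> real) \<Rightarrow> nat \<Rightarrow> nat \<Rightarrow> real \<times> real \<Rightarrow> real" where
  "U1 N xi a b p = (\<Sum>j=1..N-1. \<Sum>k=1..N-1. xi j k * phiL N a b j k p)
     + 1/2 * ((\<Sum>j=1..N-1. phiL N a b j N p)
       + (if 1 = a \<and> N = b then 1 else 0) * psi2_hat (Finv N 1 N p)
       + (if N = a \<and> N = b then 1 else 0) * psi2_hat (Finv N N N p))"

definition U1x :: "nat \<Rightarrow> (nat \<Rightarrow> nat \<Rightarrow> real) \<Rightarrow> nat \<Rightarrow> nat \<Rightarrow> real \<Rightarrow> real" where
  "U1x N xi a b x = (\<Sum>j=1..N-1. \<Sum>k=1..N-1. xi j k * phiLx N a b j k)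
     + 1/2 * ((\<Sum>j=1..N-1. phiLx N a b j N)
       + (if 1 = a \<and> N = b then 1 else 0) * dpsi N 1 x
       + (if N = a \<and> N = b then 1 else 0) * dpsi N N x)"

definition U2 :: "nat \<Rightarrow> (nat \<Rightarrow> nat \<Rightarrow> real) \<Rightarrow> nat \<Rightarrow> nat \<Rightarrow> real \<times> real \<Rightarrow> real" where
  "U2 N eta a b p = (\<Sum>j=1..N-1. \<Sum>k=1..N-1. eta j k * phiL N a b j k p)"

definition U2y :: "nat \<Rightarrow> (nat \<Rightarrow> nat \<Rightarrow> real) \<Rightarrow> nat \<Rightarrow> nat \<Rightarrow> real" where
  "U2y N eta a b = (\<Sum>j=1..N-1. \<Sum>k=1..N-1. eta j k * phiLy N a b j k)"

lemma phi_loc: "N > 0 \<Longrightarrow> p \<in> sq N a b \<Longrightarrow> phi N j k p = phiL N a b j k p"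
  unfolding phi_def phiL_def by (rule sum.cong) (auto simp: ind_sq)

lemma uh1_loc: "N > 0 \<Longrightarrow> p \<in> sq N a b \<Longrightarrow> uh1 N xi p = U1 N xi a b p"
  unfolding uh1_def U1_def psi2_TL_def psi2_TR_def by (simp add: phi_loc ind_sq)

lemma uh2_loc: "N > 0 \<Longrightarrow> p \<in> sq N a b \<Longrightarrow> uh2 N eta p = U2 N eta a b p"
  unfolding uh2_def U2_def by (simp add: phi_loc)

lemma loc_phi_dx: "((\<lambda>t. loc_phi h V c (t,y)) has_real_derivative (2*(fst V - fst c)/h^2)) (at x)"
  unfolding loc_phi_def divide_inverse by (auto intro!: derivative_eq_intros)

lemma loc_phi_dy: "((\<lambda>t. loc_phi h V c (x,t)) has_real_derivative (2*(snd V - snd c)/h^2)) (at y)"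
  unfolding loc_phi_def divide_inverse by (auto intro!: derivative_eq_intros)

lemma phiL_dx: "((\<lambda>t. phiL N a b j k (t,y)) has_real_derivative phiLx N a b j k) (at x)"
  unfolding phiL_def phiLx_def by (intro DERIV_sum DERIV_cmult loc_phi_dx)

lemma phiL_dy: "((\<lambda>t. phiL N a b j k (x,t)) has_real_derivative phiLy N a b j k) (at y)"
  unfolding phiL_def phiLy_def by (intro DERIV_sum DERIV_cmult loc_phi_dy)

lemma psi_dx: "((\<lambda>t. psi2_hat (Finv N c N (t,y))) has_real_derivative dpsi N c x) (at x)"
proof -
  define m where "m = 2 / mesh N"
  define cc where "cc = fst (center N c N)"
  define Y where "Y = m * (y - snd (center N c N))"
  have eq: "(\<lambda>t. psi2_hat (Finv N c N (t,y))) = (\<lambda>t. (1/4 + 1/2 * Y - 3/8 * theta Y) + 3/8 * ((m*(t-cc))^2 - 5/3*(m*(t-cc))^4))"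
    by (auto simp: psi2_hat_def Finv_def theta_def m_def cc_def Y_def algebra_simps)
  have "((\<lambda>t. (1/4 + 1/2 * Y - 3/8 * theta Y) + 3/8 * ((m*(t-cc))^2 - 5/3*(m*(t-cc))^4)) has_real_derivative
      3/8 * (2 * (m*(x-cc)) * m - 5/3 * (4 * (m*(x-cc))^3 * m))) (at x)"
    by (auto intro!: derivative_eq_intros)
  moreover have "3/8 * (2 * (m*(x-cc)) * m - 5/3 * (4 * (m*(x-cc))^3 * m)) = dpsi N c x"
    by (simp add: dpsi_def m_def cc_def algebra_simps)
  ultimately show ?thesis using eq by simp
qed

lemma U1_dx: "((\<lambda>t. U1 N xi a b (t,y)) has_real_derivative U1x N xi a b x) (at x)"
  unfolding U1_def U1x_def
  by (intro DERIV_add DERIV_sum DERIV_cmult phiL_dx psi_dx)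

lemma U2_dy: "((\<lambda>t. U2 N eta a b (x,t)) has_real_derivative U2y N eta a b) (at y)"
  unfolding U2_def U2y_def
  by (intro DERIV_add DERIV_sum DERIV_cmult phiL_dy)

lemma divh_loc:
  assumes N: "N > 0" and p: "p \<in> sq N a b"
  shows "divh N xi eta p = U1x N xi a b (fst p) + U2y N eta a b"
proof -
  obtain x y where xy: "p = (x,y)" by (cases p)
  have ex: "eventually (\<lambda>t. t \<in> {(real a - 1) * mesh N <..< real a * mesh N}) (nhds x)"
    using p xy by (intro eventually_nhds_in_open) (auto simp: mem_sq)
  have ey: "eventually (\<lambda>t. t \<in> {(real b - 1) * mesh N <..< real b * mesh N}) (nhds y)"
    using p xy by (intro eventually_nhds_in_open) (auto simp: mem_sq)
  have e1: "eventually (\<lambda>t. uh1 N xi (t, y) = U1 N xi a b (t, y)) (nhds x)"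
    using ex
  proof (rule eventually_mono)
    fix t assume "t \<in> {(real a - 1) * mesh N <..< real a * mesh N}"
    then have "(t,y) \<in> sq N a b" using p xy by (auto simp: mem_sq)
    then show "uh1 N xi (t, y) = U1 N xi a b (t, y)" using uh1_loc[OF N] by blast
  qed
  have e2: "eventually (\<lambda>t. uh2 N eta (x, t) = U2 N eta a b (x, t)) (nhds y)"
    using ey
  proof (rule eventually_mono)
    fix t assume "t \<in> {(real b - 1) * mesh N <..< real b * mesh N}"
    then have "(x,t) \<in> sq N a b" using p xy by (auto simp: mem_sq)
    then show "uh2 N eta (x, t) = U2 N eta a b (x, t)" using uh2_loc[OF N] by blast
  qed
  have d1: "((\<lambda>t. uh1 N xi (t, y)) has_real_derivative U1x N xi a b x) (at x)"
    using DERIV_cong_ev[OF refl e1 refl] U1_dx by blast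
  have d2: "((\<lambda>t. uh2 N eta (x, t)) has_real_derivative U2y N eta a b) (at y)"
    using DERIV_cong_ev[OF refl e2 refl] U2_dy by blast
  show ?thesis unfolding divh_def xy using DERIV_imp_deriv[OF d1] DERIV_imp_deriv[OF d2] by simp
qed

definition K :: "nat \<Rightarrow> (nat \<Rightarrow> nat \<Rightarrow> real) \<Rightarrow> (nat \<Rightarrow> nat \<Rightarrow> real) \<Rightarrow> nat \<Rightarrow> nat \<Rightarrow> real" where
  "K N xi eta a b = (\<Sum>j=1..N-1. \<Sum>k=1..N-1. xi j k * phiLx N a b j k)
     + 1/2 * (\<Sum>j=1..N-1. phiLx N a b j N) + U2y N eta a b"

lemma dpsi_odd: "dpsi N c ((real c - 1) * mesh N + real c * mesh N - x) = - dpsi N c x"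
proof -
  have "2 / mesh N * ((real c - 1) * mesh N + real c * mesh N - x - fst (center N c N))
      = - (2 / mesh N * (x - fst (center N c N)))"
    by (simp add: center_def algebra_simps)
  note e = this
  define g where "g = (\<lambda>X::real. 3/8 * (2 * X - 20/3 * X^3) * (2 / mesh N))"
  have gd: "dpsi N c z = g (2 / mesh N * (z - fst (center N c N)))" for z
    unfolding dpsi_def g_def ..
  have go: "g (- X) = - g X" for X unfolding g_def by (simp add: algebra_simps)
  show ?thesis unfolding gd e go ..
qed

lemma dpsi_int:
  assumes "N > 0"
  shows "((\<lambda>p. dpsi N c (fst p)) has_integral 0)
     (cbox ((real c - 1) * mesh N, (real N - 1) * mesh N) (real c * mesh N, real N * mesh N))"
proof (rule odd_int_zero)
  show "(\<lambda>p. dpsi N c (fst p)) integrable_on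
     cbox ((real c - 1) * mesh N, (real N - 1) * mesh N) (real c * mesh N, real N * mesh N)"
    by (rule integrable_continuous) (unfold dpsi_def, intro continuous_intros)
  show "dpsi N c (fst (((real c - 1) * mesh N + real c * mesh N, (real N - 1) * mesh N + real N * mesh N) - p)) =
        - dpsi N c (fst p)" for p
    using dpsi_odd[of N c "fst p"] by (cases p) simp
qed

lemma D_val:
  assumes N: "N > 0"
  shows "integral (sq N a b) (divh N xi eta) = (mesh N)^2 * K N xi eta a b"
proof -
  define h where "h = mesh N"
  define c1 :: real where "c1 = (if 1 = a \<and> N = b then 1 else 0)"
  define c2 :: real where "c2 = (if N = a \<and> N = b then 1 else 0)"
  define lo where "lo = ((real a - 1) * h, (real b - 1) * h)"
  define hi where "hi = (real a * h, real b * h)"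
  define F :: "real \<times> real \<Rightarrow> real" where "F = (\<lambda>p. K N xi eta a b + 1/2 * (c1 * dpsi N 1 (fst p) + c2 * dpsi N N (fst p)))"
  have sqe: "sq N a b = box lo hi" by (simp add: sq_def lo_def hi_def h_def)
  have "integral (sq N a b) (divh N xi eta) = integral (sq N a b) F"
    by (rule integral_cong) (simp add: divh_loc[OF N] F_def U1x_def K_def c1_def c2_def algebra_simps)
  also have "\<dots> = integral (cbox lo hi) F" by (simp add: sqe integral_open_interval)
  also have "\<dots> = h^2 * K N xi eta a b"
  proof -
    have g1: "((\<lambda>p. c1 * dpsi N 1 (fst p)) has_integral 0) (cbox lo hi)"
    proof (cases "1 = a \<and> N = b")
      case True
      then show ?thesis using has_integral_mult_right[OF dpsi_int[OF N, of 1], of 1]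
        by (auto simp: c1_def lo_def hi_def h_def)
    next
      case False
      then have "c1 = 0" unfolding c1_def by auto
      then show ?thesis by simp
    qed
    have g2: "((\<lambda>p. c2 * dpsi N N (fst p)) has_integral 0) (cbox lo hi)"
    proof (cases "N = a \<and> N = b")
      case True
      then show ?thesis using has_integral_mult_right[OF dpsi_int[OF N, of N], of 1]
        by (auto simp: c2_def lo_def hi_def h_def)
    next
      case False
      then have "c2 = 0" unfolding c2_def by auto
      then show ?thesis by simp
    qed
    have c0: "((\<lambda>p::real\<times>real. K N xi eta a b) has_integral (h*h) *\<^sub>R K N xi eta a b) (cbox lo hi)"
      using has_integral_const[of "K N xi eta a b" lo hi] mesh_pos[OF N] by (simp add: h_def lo_def hi_def content_Pair algebra_simps)
    have "(F has_integral ((h*h) *\<^sub>R K N xi eta a b + 1/2 * (0 + 0))) (cbox lo hi)"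
      unfolding F_def
      by (intro has_integral_add c0 has_integral_mult_right g1 g2)
    then show ?thesis by (simp add: integral_unique power2_eq_square)
  qed
  finally show ?thesis by (simp add: h_def)
qed

lemma integral_mult_const: "integral S (\<lambda>p. f p * (c::real)) = integral S f * c"
proof -
  have "(\<lambda>p. f p * c) = (\<lambda>p. c *\<^sub>R f p)" by (auto simp: mult.commute)
  then show ?thesis by (simp add: mult.commute)
qed

lemma sum2_delta:
  assumes "finite A" "finite B" "a0 \<in> A" "b0 \<in> B"
  shows "(\<Sum>a\<in>A. \<Sum>b\<in>B. if a0 = a \<and> b0 = b then g a b else (0::real)) = g a0 b0"
proof -
  have "(\<Sum>a\<in>A. \<Sum>b\<in>B. if a0 = a \<and> b0 = b then g a b else (0::real))
      = (\<Sum>a\<in>A. if a0 = a then (\<Sum>b\<in>B. if b0 = b then g a b else 0) else 0)"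
    by (rule sum.cong) auto
  also have "\<dots> = g a0 b0" using assms by simp
  finally show ?thesis .
qed

lemma sum_swap4:
  fixes f :: "'a \<Rightarrow> 'b \<Rightarrow> 'c \<Rightarrow> 'd \<Rightarrow> real"
  shows "(\<Sum>a\<in>A. \<Sum>b\<in>B. \<Sum>j\<in>J. \<Sum>k\<in>L. f a b j k) = (\<Sum>j\<in>J. \<Sum>k\<in>L. \<Sum>a\<in>A. \<Sum>b\<in>B. f a b j k)"
proof -
  have "(\<Sum>a\<in>A. \<Sum>b\<in>B. \<Sum>j\<in>J. \<Sum>k\<in>L. f a b j k) = (\<Sum>a\<in>A. \<Sum>j\<in>J. \<Sum>b\<in>B. \<Sum>k\<in>L. f a b j k)"
    by (rule sum.cong[OF refl], rule sum.swap)
  also have "\<dots> = (\<Sum>a\<in>A. \<Sum>j\<in>J. \<Sum>k\<in>L. \<Sum>b\<in>B. f a b j k)"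
    by (rule sum.cong[OF refl], rule sum.cong[OF refl], rule sum.swap)
  also have "\<dots> = (\<Sum>j\<in>J. \<Sum>a\<in>A. \<Sum>k\<in>L. \<Sum>b\<in>B. f a b j k)"
    by (rule sum.swap)
  also have "\<dots> = (\<Sum>j\<in>J. \<Sum>k\<in>L. \<Sum>a\<in>A. \<Sum>b\<in>B. f a b j k)"
    by (rule sum.cong[OF refl], rule sum.swap)
  finally show ?thesis .
qed

lemma sum_swap3:
  fixes f :: "'a \<Rightarrow> 'b \<Rightarrow> 'c \<Rightarrow> real"
  shows "(\<Sum>a\<in>A. \<Sum>b\<in>B. \<Sum>j\<in>J. f a b j) = (\<Sum>j\<in>J. \<Sum>a\<in>A. \<Sum>b\<in>B. f a b j)"
proof -
  have "(\<Sum>a\<in>A. \<Sum>b\<in>B. \<Sum>j\<in>J. f a b j) = (\<Sum>a\<in>A. \<Sum>j\<in>J. \<Sum>b\<in>B. f a b j)"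
    by (rule sum.cong[OF refl], rule sum.swap)
  also have "\<dots> = (\<Sum>j\<in>J. \<Sum>a\<in>A. \<Sum>b\<in>B. f a b j)" by (rule sum.swap)
  finally show ?thesis .
qed

lemma delta_collapse:
  fixes w :: "nat \<Rightarrow> nat \<Rightarrow> real" and F :: "nat \<times> nat \<Rightarrow> real"
  assumes "finite A" "finite T"
  shows "(\<Sum>a\<in>A. \<Sum>b\<in>A. w a b * (\<Sum>jk\<in>(A \<times> A) \<inter> T. (if fst jk = a \<and> snd jk = b then 1 else 0) * F jk))
       = (\<Sum>jk\<in>(A \<times> A) \<inter> T. w (fst jk) (snd jk) * F jk)"
proof -
  have "(\<Sum>a\<in>A. \<Sum>b\<in>A. w a b * (\<Sum>jk\<in>(A \<times> A) \<inter> T. (if fst jk = a \<and> snd jk = b then 1 else 0) * F jk))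
     = (\<Sum>a\<in>A. \<Sum>b\<in>A. \<Sum>jk\<in>(A \<times> A) \<inter> T. (if fst jk = a \<and> snd jk = b then w a b * F jk else 0))"
    by (intro sum.cong refl) (auto simp: sum_distrib_left intro!: sum.cong)
  also have "\<dots> = (\<Sum>jk\<in>(A \<times> A) \<inter> T. \<Sum>a\<in>A. \<Sum>b\<in>A. (if fst jk = a \<and> snd jk = b then w a b * F jk else 0))"
    by (rule sum_swap3)
  also have "\<dots> = (\<Sum>jk\<in>(A \<times> A) \<inter> T. w (fst jk) (snd jk) * F jk)"
    by (rule sum.cong[OF refl], rule sum2_delta) (use assms in auto)
  finally show ?thesis .
qed

lemma alt_odd: "(\<Sum>j=1..2*m+1. (-1::real)^j) = -1"
  by (induction m) (auto simp: numeral_2_eq_2)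

lemma alt_even: "(\<Sum>j=1..2*m. (-1::real)^j) = 0"
  by (induction m) (auto simp: numeral_2_eq_2)

lemma sum_pair2:
  fixes f :: "nat \<times> nat \<Rightarrow> real"
  assumes "j \<noteq> j'" "k \<noteq> k'"
  shows "(\<Sum>jk\<in>{j, j'} \<times> {k, k'}. f jk) = f (j,k) + f (j,k') + f (j',k) + f (j',k')"
  using assms by (simp add: sum.cartesian_product[symmetric])

lemma wphix:
  assumes N: "N > 0" and j: "j \<in> {1..N-1}" and k: "k \<in> {1..N-1}"
  shows "(\<Sum>a\<in>{1..N}. \<Sum>b\<in>{1..N}. w a b * phiLx N a b j k)
     = real N * (w j k - w (j+1) k + w j (k+1) - w (j+1) (k+1))"
proof -
  have S: "({1..N} \<times> {1..N}) \<inter> ({j, j+1} \<times> {k, k+1}) = {j, j+1} \<times> {k, k+1}" using j k by auto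
  show ?thesis unfolding phiLx_def
    apply (subst delta_collapse, simp, simp)
    apply (subst S, subst sum_pair2, simp, simp)
    using N by (simp add: vert_def center_def mesh_def field_simps power2_eq_square)
qed

lemma wphiy:
  assumes N: "N > 0" and j: "j \<in> {1..N-1}" and k: "k \<in> {1..N-1}"
  shows "(\<Sum>a\<in>{1..N}. \<Sum>b\<in>{1..N}. w a b * phiLy N a b j k)
     = real N * (w j k + w (j+1) k - w j (k+1) - w (j+1) (k+1))"
proof -
  have S: "({1..N} \<times> {1..N}) \<inter> ({j, j+1} \<times> {k, k+1}) = {j, j+1} \<times> {k, k+1}" using j k by auto
  show ?thesis unfolding phiLy_def
    apply (subst delta_collapse, simp, simp)
    apply (subst S, subst sum_pair2, simp, simp)
    using N by (simp add: vert_def center_def mesh_def field_simps power2_eq_square)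
qed

lemma wphixN:
  assumes N: "N > 0" and j: "j \<in> {1..N-1}"
  shows "(\<Sum>a\<in>{1..N}. \<Sum>b\<in>{1..N}. w a b * phiLx N a b j N)
     = real N * (w j N - w (j+1) N)"
proof -
  have S: "({1..N} \<times> {1..N}) \<inter> ({j, j+1} \<times> {N, N+1}) = {(j,N), (j+1,N)}" using j by auto
  show ?thesis unfolding phiLx_def
    apply (subst delta_collapse, simp, simp)
    apply (subst S)
    using N by (simp add: vert_def center_def mesh_def field_simps power2_eq_square)
qed

lemma wK:
  assumes N: "N > 0"
  shows "(\<Sum>a\<in>{1..N}. \<Sum>b\<in>{1..N}. w a b * K N xi eta a b)
    = (\<Sum>j=1..N-1. \<Sum>k=1..N-1. xi j k * (real N * (w j k - w (j+1) k + w j (k+1) - w (j+1) (k+1))))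
      + 1/2 * (\<Sum>j=1..N-1. real N * (w j N - w (j+1) N))
      + (\<Sum>j=1..N-1. \<Sum>k=1..N-1. eta j k * (real N * (w j k + w (j+1) k - w j (k+1) - w (j+1) (k+1))))"
proof -
  have X: "(\<Sum>a\<in>{1..N}. \<Sum>b\<in>{1..N}. w a b * (\<Sum>j=1..N-1. \<Sum>k=1..N-1. xi j k * phiLx N a b j k))
      = (\<Sum>j=1..N-1. \<Sum>k=1..N-1. xi j k * (real N * (w j k - w (j+1) k + w j (k+1) - w (j+1) (k+1))))"
  proof -
    have "(\<Sum>a\<in>{1..N}. \<Sum>b\<in>{1..N}. w a b * (\<Sum>j=1..N-1. \<Sum>k=1..N-1. xi j k * phiLx N a b j k))
       = (\<Sum>a\<in>{1..N}. \<Sum>b\<in>{1..N}. \<Sum>j=1..N-1. \<Sum>k=1..N-1. xi j k * (w a b * phiLx N a b j k))"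
      by (simp add: sum_distrib_left mult_ac)
    also have "\<dots> = (\<Sum>j=1..N-1. \<Sum>k=1..N-1. \<Sum>a\<in>{1..N}. \<Sum>b\<in>{1..N}. xi j k * (w a b * phiLx N a b j k))"
      by (rule sum_swap4)
    also have "\<dots> = (\<Sum>j=1..N-1. \<Sum>k=1..N-1. xi j k * (\<Sum>a\<in>{1..N}. \<Sum>b\<in>{1..N}. w a b * phiLx N a b j k))"
      by (simp add: sum_distrib_left)
    also have "\<dots> = (\<Sum>j=1..N-1. \<Sum>k=1..N-1. xi j k * (real N * (w j k - w (j+1) k + w j (k+1) - w (j+1) (k+1))))"
      by (intro sum.cong refl, subst wphix[OF N]) auto
    finally show ?thesis .
  qed
  have Z: "(\<Sum>a\<in>{1..N}. \<Sum>b\<in>{1..N}. w a b * (\<Sum>j=1..N-1. \<Sum>k=1..N-1. eta j k * phiLy N a b j k))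
      = (\<Sum>j=1..N-1. \<Sum>k=1..N-1. eta j k * (real N * (w j k + w (j+1) k - w j (k+1) - w (j+1) (k+1))))"
  proof -
    have "(\<Sum>a\<in>{1..N}. \<Sum>b\<in>{1..N}. w a b * (\<Sum>j=1..N-1. \<Sum>k=1..N-1. eta j k * phiLy N a b j k))
       = (\<Sum>a\<in>{1..N}. \<Sum>b\<in>{1..N}. \<Sum>j=1..N-1. \<Sum>k=1..N-1. eta j k * (w a b * phiLy N a b j k))"
      by (simp add: sum_distrib_left mult_ac)
    also have "\<dots> = (\<Sum>j=1..N-1. \<Sum>k=1..N-1. \<Sum>a\<in>{1..N}. \<Sum>b\<in>{1..N}. eta j k * (w a b * phiLy N a b j k))"
      by (rule sum_swap4)
    also have "\<dots> = (\<Sum>j=1..N-1. \<Sum>k=1..N-1. eta j k * (\<Sum>a\<in>{1..N}. \<Sum>b\<in>{1..N}. w a b * phiLy N a b j k))"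
      by (simp add: sum_distrib_left)
    also have "\<dots> = (\<Sum>j=1..N-1. \<Sum>k=1..N-1. eta j k * (real N * (w j k + w (j+1) k - w j (k+1) - w (j+1) (k+1))))"
      by (intro sum.cong refl, subst wphiy[OF N]) auto
    finally show ?thesis .
  qed
  have Y: "(\<Sum>a\<in>{1..N}. \<Sum>b\<in>{1..N}. w a b * (\<Sum>j=1..N-1. phiLx N a b j N))
      = (\<Sum>j=1..N-1. real N * (w j N - w (j+1) N))"
  proof -
    have "(\<Sum>a\<in>{1..N}. \<Sum>b\<in>{1..N}. w a b * (\<Sum>j=1..N-1. phiLx N a b j N))
       = (\<Sum>a\<in>{1..N}. \<Sum>b\<in>{1..N}. \<Sum>j=1..N-1. w a b * phiLx N a b j N)"
      by (simp add: sum_distrib_left)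
    also have "\<dots> = (\<Sum>j=1..N-1. \<Sum>a\<in>{1..N}. \<Sum>b\<in>{1..N}. w a b * phiLx N a b j N)"
      by (rule sum_swap3)
    also have "\<dots> = (\<Sum>j=1..N-1. real N * (w j N - w (j+1) N))"
      by (intro sum.cong refl, subst wphixN[OF N]) auto
    finally show ?thesis .
  qed
  have "(\<Sum>a\<in>{1..N}. \<Sum>b\<in>{1..N}. w a b * K N xi eta a b)
     = (\<Sum>a\<in>{1..N}. \<Sum>b\<in>{1..N}. w a b * (\<Sum>j=1..N-1. \<Sum>k=1..N-1. xi j k * phiLx N a b j k))
       + 1/2 * (\<Sum>a\<in>{1..N}. \<Sum>b\<in>{1..N}. w a b * (\<Sum>j=1..N-1. phiLx N a b j N))
       + (\<Sum>a\<in>{1..N}. \<Sum>b\<in>{1..N}. w a b * (\<Sum>j=1..N-1. \<Sum>k=1..N-1. eta j k * phiLy N a b j k))"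
    unfolding K_def U2y_def by (simp add: sum.distrib sum_distrib_left algebra_simps)
  then show ?thesis using X Y Z by simp
qed

lemma sumK1:
  assumes N: "N > 0"
  shows "(\<Sum>a\<in>{1..N}. \<Sum>b\<in>{1..N}. K N xi eta a b) = 0"
  using wK[OF N, of "\<lambda>a b. 1" xi eta] by simp

lemma sumKs:
  assumes N: "N > 0" and ev: "even N"
  shows "(\<Sum>a\<in>{1..N}. \<Sum>b\<in>{1..N}. (-1)^(a+b) * K N xi eta a b) = - real N"
proof -
  obtain m where m: "N = 2 * Suc m" using N ev by (metis dvd_def gr0_implies_Suc mult_0_right not0_implies_Suc)
  have e: "(\<Sum>j=1..N-1. real N * ((-1::real)^(j+N) - (-1)^(j+1+N))) = 2 * real N * (\<Sum>j=1..N-1. (-1::real)^j)"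
    using ev by (simp add: sum_distrib_left power_add mult_ac)
  have "N - 1 = 2 * m + 1" using m by simp
  then have "(\<Sum>j=1..N-1. (-1::real)^j) = -1" using alt_odd[of m] by simp
  then show ?thesis using wK[OF N, of "\<lambda>a b. (-1)^(a+b)" xi eta] e by (simp add: power_add)
qed

lemma delta_diff_sum:
  fixes P :: "nat \<Rightarrow> nat \<Rightarrow> real"
  assumes "finite A" "finite B" "a \<in> A" "a0 \<in> A" "b \<in> B" "b0 \<in> B"
  shows "(\<Sum>j\<in>A. \<Sum>k\<in>B. P j k * ((if a = j \<and> b = k then 1 else 0) - (if a0 = j \<and> b0 = k then 1 else 0)))
     = P a b - P a0 b0"
proof -
  have "(\<Sum>j\<in>A. \<Sum>k\<in>B. P j k * ((if a = j \<and> b = k then 1 else 0) - (if a0 = j \<and> b0 = k then 1 else 0)))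
     = (\<Sum>j\<in>A. \<Sum>k\<in>B. (if a = j \<and> b = k then P j k else 0)) - (\<Sum>j\<in>A. \<Sum>k\<in>B. (if a0 = j \<and> b0 = k then P j k else 0))"
    by (simp add: sum_subtractf[symmetric] algebra_simps) (intro sum.cong refl, auto)
  also have "\<dots> = P a b - P a0 b0"
    using assms by (simp add: sum2_delta)
  finally show ?thesis .
qed

theorem theorem4p1:
  fixes N :: nat and xi eta :: "nat \<Rightarrow> nat \<Rightarrow> real"
  assumes "N > 0" and "even N"
    and "\<forall>q. pressure_space N q \<longrightarrow>
           (\<Sum>j=1..N. \<Sum>k=1..N. integral (sq N j k) (\<lambda>p. divh N xi eta p * q j k)) = 0"
  shows "(\<forall>j\<in>{1..N}. \<forall>k\<in>{1..N}. \<bar>integral (sq N j k) (divh N xi eta)\<bar> = (mesh N)^3)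
       \<and> (\<exists>\<gamma>. \<bar>\<gamma>\<bar> = (mesh N)^3 \<and>
            (\<forall>j\<in>{1..N}. \<forall>k\<in>{1..N}.
               integral (sq N j k) (divh N xi eta) = (if even (j+k) then \<gamma> else - \<gamma>)))"
proof -
  note N = assms(1)
  define D where "D a b = integral (sq N a b) (divh N xi eta)" for a b
  define h where "h = mesh N"
  have hN: "h = 1 / real N" by (simp add: h_def mesh_def)
  have Dv: "D a b = h^2 * K N xi eta a b" for a b by (simp add: D_def h_def D_val[OF N])
  obtain m where m: "N = 2 * Suc m" using N assms(2) by (metis dvd_def gr0_implies_Suc mult_0_right not0_implies_Suc)
  have same: "D a b = D a0 b0"
    if ab: "a \<in> {1..N}" "b \<in> {1..N}" "a0 \<in> {1..N}" "b0 \<in> {1..N}" and par: "even (a+b) = even (a0+b0)" for a b a0 b0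
  proof -
    define q where "q j k = (if a = j \<and> b = k then 1 else 0) - (if a0 = j \<and> b0 = k then (1::real) else 0)" for j k
    have ps: "pressure_space N q"
    proof -
      have "(\<Sum>j=1..N. \<Sum>k=1..N. if even (j+k) then q j k * (mesh N)^2 else 0)
          = (\<Sum>j=1..N. \<Sum>k=1..N. (if even (j+k) then (mesh N)^2 else 0) * ((if a = j \<and> b = k then 1 else 0) - (if a0 = j \<and> b0 = k then 1 else 0)))"
        by (intro sum.cong refl) (simp add: q_def)
      also have "\<dots> = 0" using ab par by (subst delta_diff_sum) auto
      finally have 1: "(\<Sum>j=1..N. \<Sum>k=1..N. if even (j+k) then q j k * (mesh N)^2 else 0) = 0" .
      have "(\<Sum>j=1..N. \<Sum>k=1..N. if odd (j+k) then q j k * (mesh N)^2 else 0)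
          = (\<Sum>j=1..N. \<Sum>k=1..N. (if odd (j+k) then (mesh N)^2 else 0) * ((if a = j \<and> b = k then 1 else 0) - (if a0 = j \<and> b0 = k then 1 else 0)))"
        by (intro sum.cong refl) (simp add: q_def)
      also have "\<dots> = 0" using ab par by (subst delta_diff_sum) auto
      finally have 2: "(\<Sum>j=1..N. \<Sum>k=1..N. if odd (j+k) then q j k * (mesh N)^2 else 0) = 0" .
      show ?thesis unfolding pressure_space_def using 1 2 by blast
    qed
    have "0 = (\<Sum>j=1..N. \<Sum>k=1..N. integral (sq N j k) (\<lambda>p. divh N xi eta p * q j k))"
      using assms(3) ps by simp
    also have "\<dots> = (\<Sum>j=1..N. \<Sum>k=1..N. D j k * ((if a = j \<and> b = k then 1 else 0) - (if a0 = j \<and> b0 = k then 1 else 0)))"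
      by (simp add: integral_mult_const D_def q_def)
    also have "\<dots> = D a b - D a0 b0" using ab by (subst delta_diff_sum) auto
    finally show ?thesis by simp
  qed
  define R where "R = D 1 1"
  define B where "B = D 2 1"
  define \<alpha> where "\<alpha> = (R + B) / 2"
  define \<beta> where "\<beta> = (R - B) / 2"
  have N2: "2 \<le> N" using m by simp
  have Dab: "D a b = \<alpha> + \<beta> * (-1)^(a+b)" if "a \<in> {1..N}" "b \<in> {1..N}" for a b
  proof (cases "even (a+b)")
    case True
    then have "D a b = R" unfolding R_def using same[of a b 1 1] that N by auto
    then show ?thesis using True by (simp add: \<alpha>_def \<beta>_def field_simps)
  next
    case False
    then have "D a b = B" unfolding B_def using same[of a b 2 1] that N2 by auto
    then show ?thesis using False by (simp add: \<alpha>_def \<beta>_def field_simps)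
  qed
  have alt0: "(\<Sum>a=1..N. (-1::real)^a) = 0" unfolding m by (rule alt_even)
  have ss: "(\<Sum>a=1..N. \<Sum>b=1..N. (-1::real)^(a+b)) = 0"
    using alt0 by (simp add: power_add sum_distrib_left[symmetric] sum_distrib_right[symmetric])
  have s2: "(\<Sum>a=1..N. \<Sum>b=1..N. (-1::real)^(a+b) * (-1)^(a+b)) = real N * real N"
    by (simp flip: power_add)
  have sum1: "(\<Sum>a=1..N. \<Sum>b=1..N. D a b) = \<alpha> * (real N * real N)"
  proof -
    have "(\<Sum>a=1..N. \<Sum>b=1..N. D a b) = (\<Sum>a=1..N. \<Sum>b=1..N. \<alpha> + \<beta> * (-1)^(a+b))"
      by (intro sum.cong refl) (simp add: Dab)
    also have "\<dots> = \<alpha> * (real N * real N) + \<beta> * (\<Sum>a=1..N. \<Sum>b=1..N. (-1::real)^(a+b))"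
      by (simp add: sum.distrib sum_distrib_left)
    finally show ?thesis using ss by simp
  qed
  have sum2: "(\<Sum>a=1..N. \<Sum>b=1..N. (-1)^(a+b) * D a b) = \<beta> * (real N * real N)"
  proof -
    have "(\<Sum>a=1..N. \<Sum>b=1..N. (-1)^(a+b) * D a b) = (\<Sum>a=1..N. \<Sum>b=1..N. \<alpha> * (-1)^(a+b) + \<beta> * ((-1)^(a+b) * (-1)^(a+b)))"
      by (intro sum.cong refl) (simp add: Dab algebra_simps)
    also have "\<dots> = \<alpha> * (\<Sum>a=1..N. \<Sum>b=1..N. (-1::real)^(a+b)) + \<beta> * (\<Sum>a=1..N. \<Sum>b=1..N. (-1::real)^(a+b) * (-1)^(a+b))"
      by (simp only: sum.distrib sum_distrib_left)
    finally show ?thesis using ss s2 by simp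
  qed
  have k1: "(\<Sum>a=1..N. \<Sum>b=1..N. D a b) = 0"
    using sumK1[OF N, of xi eta] by (simp add: Dv sum_distrib_left[symmetric])
  have k2: "(\<Sum>a=1..N. \<Sum>b=1..N. (-1)^(a+b) * D a b) = -(h^2 * real N)"
  proof -
    have "(\<Sum>a=1..N. \<Sum>b=1..N. (-1)^(a+b) * D a b) = h^2 * (\<Sum>a=1..N. \<Sum>b=1..N. (-1)^(a+b) * K N xi eta a b)"
      by (simp add: Dv sum_distrib_left mult_ac)
    then show ?thesis using sumKs[OF N assms(2), of xi eta] by simp
  qed
  have Npos: "real N > 0" using N by simp
  have a0: "\<alpha> = 0" using sum1 k1 Npos by simp
  have b0: "\<beta> = -(h^3)"
  proof -
    have "\<beta> * (real N * real N) = -(h^2 * real N)" using sum2 k2 by simp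
    then show ?thesis using Npos by (simp add: hN field_simps power2_eq_square power3_eq_cube)
  qed
  have fin: "D a b = (if even (a+b) then -(h^3) else h^3)" if "a \<in> {1..N}" "b \<in> {1..N}" for a b
    using Dab[OF that] a0 b0 by simp
  have hpos: "h > 0" using hN Npos by simp
  show ?thesis
  proof
    show "\<forall>j\<in>{1..N}. \<forall>k\<in>{1..N}. \<bar>integral (sq N j k) (divh N xi eta)\<bar> = (mesh N)^3"
      using fin hpos by (auto simp: D_def h_def[symmetric])
    show "\<exists>\<gamma>. \<bar>\<gamma>\<bar> = (mesh N)^3 \<and> (\<forall>j\<in>{1..N}. \<forall>k\<in>{1..N}.
               integral (sq N j k) (divh N xi eta) = (if even (j+k) then \<gamma> else - \<gamma>))"
      using fin hpos by (intro exI[of _ "-(h^3)"]) (auto simp: D_def h_def[symmetric])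
  qed
qed

end
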